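(* For $m=1,2,3,\ldots$ define $$P_m=\prod_{n=1}^{\infty}\left(\prod_{k=0}^{n}(k+1)^{(-1)^{k+1}\binom{n}{k}}\right)^{\left(\frac{m}{m+1}\right)^n}.$$ Then the product converges, and $$\gamma(-m)=\frac{1}{m}\log\frac{m+1}{P_m}.$$
   Context: $\gamma(z)$ is the generalized-Euler-constant function: for $|z|\le1$, $\gamma(z)=\sum_{n=1}^{\infty} z^{n-1}\left(\frac{1}{n}-\log\frac{n+1}{n}\right)$, and for $z\in\mathbb{C}\setminus[1,\infty)$ (in particular for negative real $z$) it denotes the analytic continuation $\gamma(z)=\int_0^1\frac{1-x+\log x}{(1-xz)\log x}\,dx$. *)

theory Defs
  imports "HOL-Analysis.Analysis"
begin

text \<open>Analytic continuation of the generalized Euler constant function,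
  gamma(z) = integral from 0 to 1 of (1 - x + log x) / ((1 - x z) log x) dx,
  valid for z in the complex plane minus [1, infinity).\<close>
definition gen_euler_gamma :: "complex \<Rightarrow> complex" where
  "gen_euler_gamma z = integral {0..1}
     (\<lambda>x::real. complex_of_real (1 - x + ln x) / ((1 - complex_of_real x * z) * complex_of_real (ln x)))"

definition P_factor :: "nat \<Rightarrow> nat \<Rightarrow> real" where
  "P_factor m n = (\<Prod>k=0..n. (real k + 1) powr ((-1) ^ (k + 1) * real (n choose k)))
                    powr ((real m / (real m + 1)) ^ n)"

end

theory Submission
  imports Defs "HOL-Real_Asymp.Real_Asymp"
begin

lemma inner_t:
  assumes "p \<ge> 1" "0 < x" "x < (1::real)"
  shows "((\<lambda>t. x powr t) has_integral ((x powr p - x) / ln x)) {1..p}"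
proof -
  have "ln x \<noteq> 0" using assms ln_less_zero[of x] by auto
  have "((\<lambda>t. x powr t) has_integral ((\<lambda>t. x powr t / ln x) p - (\<lambda>t. x powr t / ln x) 1)) {1..p}"
  proof (rule fundamental_theorem_of_calculus)
    fix t assume "t \<in> {1..p}"
    have "((\<lambda>t. exp (t * ln x) / ln x) has_real_derivative (exp (t * ln x) * ln x / ln x)) (at t within {1..p})"
      by (auto intro!: derivative_eq_intros)
    then show "((\<lambda>t. x powr t / ln x) has_vector_derivative x powr t) (at t within {1..p})"
      using assms \<open>ln x \<noteq> 0\<close> by (simp add: powr_def has_real_derivative_iff_has_vector_derivative)
  qed (use assms in auto)
  then show ?thesis using assms by (simp add: diff_divide_distrib)
qed

lemma inner_x:
  assumes "t \<ge> (1::real)"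
  shows "((\<lambda>x. x powr t) has_integral (1 / (t + 1))) {0..1}"
  using has_integral_powr_from_0[of t 1] assms by simp

lemma int_recip:
  assumes "p \<ge> (1::real)"
  shows "((\<lambda>t. 1 / (t + 1)) has_integral (ln (p + 1) - ln 2)) {1..p}"
proof -
  have "((\<lambda>t. 1 / (t + 1)) has_integral ((\<lambda>t. ln (t + 1)) p - (\<lambda>t. ln (t + 1)) 1)) {1..p}"
  proof (rule fundamental_theorem_of_calculus)
    fix t assume "t \<in> {1..p}"
    then show "((\<lambda>t. ln (t + 1)) has_vector_derivative 1 / (t + 1)) (at t within {1..p})"
      by (auto intro!: derivative_eq_intros simp flip: has_real_derivative_iff_has_vector_derivative)
  qed (use assms in auto)
  then show ?thesis by simp
qed

lemma lemA:
  assumes p: "p \<ge> (1::real)"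
  shows "((\<lambda>x. (x powr p - x) / ln x) has_integral (ln (p + 1) - ln 2)) {0..1}"
proof -
  have cont: "continuous_on (cbox (0::real,1::real) (1,p)) (\<lambda>(x,t). x powr t)"
  proof -
    have "continuous_on (cbox (0::real,1::real) (1,p)) (\<lambda>z. fst z powr snd z)"
      by (rule continuous_on_powr') (auto intro!: continuous_intros simp: cbox_Pair_eq)
    then show ?thesis by (simp add: case_prod_beta)
  qed
  have cont2: "continuous_on ({0..1} \<times> cbox 1 p) (\<lambda>(x,t). x powr t)"
    using cont by (simp add: cbox_Pair_eq)
  have swap: "integral (cbox 0 1) (\<lambda>x. integral (cbox 1 p) (\<lambda>t. x powr t)) =
           integral (cbox 1 p) (\<lambda>t. integral (cbox 0 1) (\<lambda>x. x powr t))"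
    using integral_swap_continuous[OF cont] by simp
  have I1: "continuous_on {0..1} (\<lambda>x. integral (cbox 1 p) (\<lambda>t. x powr t))"
    by (rule integral_continuous_on_param[OF cont2])
  have int1: "((\<lambda>x. integral {1..p} (\<lambda>t. x powr t)) has_integral
        integral {1..p} (\<lambda>t. integral {0..1} (\<lambda>x. x powr t))) {0..1}"
    using integrable_continuous_real[OF I1] swap by (simp add: has_integral_integral)
  have "integral {1..p} (\<lambda>t. integral {0..1} (\<lambda>x. x powr t)) = integral {1..p} (\<lambda>t. 1 / (t + 1))"
    by (rule integral_cong) (use inner_x in \<open>auto intro: integral_unique\<close>)
  also have "\<dots> = ln (p + 1) - ln 2" using int_recip[OF p] by (rule integral_unique)
  finally have int2: "((\<lambda>x. integral {1..p} (\<lambda>t. x powr t)) has_integral (ln (p + 1) - ln 2)) {0..1}"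
    using int1 by simp
  show ?thesis
  proof (rule has_integral_spike_finite[OF _ _ int2, of "{0,1}"])
    fix x :: real assume "x \<in> {0..1} - {0,1}"
    then have "0 < x" "x < 1" by auto
    then show "(x powr p - x) / ln x = integral {1..p} (\<lambda>t. x powr t)"
      using inner_t[OF p] integral_unique by metis
  qed auto
qed


lemma lim0: "((\<lambda>x::real. (x - 1) / ln x) \<longlongrightarrow> 0) (at_right 0)"
  by real_asymp

lemma lim1: "((\<lambda>x::real. (x - 1) / ln x) \<longlongrightarrow> 1) (at_left 1)"
  by real_asymp


definition F1 :: "real \<Rightarrow> real" where "F1 x = (if x = 1 then 1 else (x - 1) / ln x)"

lemma F1_cont: "continuous_on {0..1} F1"
  unfolding continuous_on_def
proof
  fix x :: real assume x: "x \<in> {0..1}"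
  consider "x = 0" | "x = 1" | "0 < x" "x < 1" using x by fastforce
  then show "(F1 \<longlongrightarrow> F1 x) (at x within {0..1})"
  proof cases
    case 1
    have ev: "eventually (\<lambda>y. (y - 1) / ln y = F1 y) (at_right (0::real))"
    proof -
      have "eventually (\<lambda>y. y \<in> {0<..<1}) (at_right (0::real))"
        by (rule eventually_at_right_real) simp
      then show ?thesis by eventually_elim (auto simp: F1_def)
    qed
    have "(F1 \<longlongrightarrow> 0) (at_right 0)" using tendsto_cong[OF ev] lim0 by simp
    then show ?thesis using 1 by (simp add: at_within_Icc_at_right F1_def)
  next
    case 2
    have ev: "eventually (\<lambda>y. (y - 1) / ln y = F1 y) (at_left (1::real))"
    proof -
      have "eventually (\<lambda>y. y \<in> {0<..<1}) (at_left (1::real))"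
        by (rule eventually_at_left_real) simp
      then show ?thesis by eventually_elim (auto simp: F1_def)
    qed
    have "(F1 \<longlongrightarrow> 1) (at_left 1)" using tendsto_cong[OF ev] lim1 by simp
    then show ?thesis using 2 by (simp add: at_within_Icc_at_left F1_def)
  next
    case 3
    have ev: "eventually (\<lambda>y. (y - 1) / ln y = F1 y) (at x)"
      using eventually_neq_at_within[of 1 x UNIV] by eventually_elim (auto simp: F1_def)
    have "ln x \<noteq> 0" using 3 ln_less_zero[of x] by auto
    have "((\<lambda>y. (y - 1) / ln y) \<longlongrightarrow> (x - 1) / ln x) (at x)"
      using 3 \<open>ln x \<noteq> 0\<close> by (auto intro!: tendsto_intros)
    moreover have "F1 x = (x - 1) / ln x" using 3 by (simp add: F1_def)
    ultimately have "(F1 \<longlongrightarrow> F1 x) (at x)" using tendsto_cong[OF ev] by simp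
    then show ?thesis using 3 by (simp add: at_within_Icc_at)
  qed
qed

lemma c1: "((\<lambda>x::real. (x - 1) / ln x) has_integral ln 2) {0..1}"
proof -
  have l42: "ln (4::real) - ln 2 = ln 2"
    using ln_mult[of "2::real" 2] by simp
  have A3: "((\<lambda>y. (y powr (3::real) - y) / ln y) has_integral ln 2) {0..1}"
    using lemA[of 3] l42 by simp
  have "((\<lambda>y. (2 * y) *\<^sub>R F1 (y ^ 2)) has_integral ln 2) {0..1}"
  proof (rule has_integral_spike_finite[OF _ _ A3, of "{0,1}"])
    fix y :: real assume "y \<in> {0..1} - {0,1}"
    then have y: "0 < y" "y < 1" by auto
    then have "y ^ 2 \<noteq> 1"
      using y by (simp add: power2_eq_1_iff)
    have l: "ln y \<noteq> 0" using y ln_less_zero[of y] by auto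
    have p3: "y powr 3 = y ^ 3" using y by simp
    have lnsq: "ln (y ^ 2) = 2 * ln y" using y by (simp add: ln_realpow)
    have "F1 (y ^ 2) = (y ^ 2 - 1) / ln (y ^ 2)"
      unfolding F1_def using \<open>y ^ 2 \<noteq> 1\<close> by (rule if_not_P)
    also have "\<dots> = (y ^ 2 - 1) / (2 * ln y)" by (simp only: lnsq)
    finally have "(2 * y) *\<^sub>R F1 (y ^ 2) = (2 * y) * ((y ^ 2 - 1) / (2 * ln y))" by simp
    also have "\<dots> = (y * y ^ 2 - y) / ln y"
      using l by (simp add: field_simps)
    also have "\<dots> = (y powr 3 - y) / ln y"
      by (simp only: p3 power3_eq_cube power2_eq_square mult.assoc)
    finally show "(2 * y) *\<^sub>R F1 (y ^ 2) = (y powr 3 - y) / ln y" .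
  qed auto
  moreover have sub: "((\<lambda>y. (2 * y) *\<^sub>R F1 (y ^ 2)) has_integral (integral {0 ^ 2..1 ^ 2} F1)) {0..1}"
    by (rule has_integral_substitution[OF _ _ _ F1_cont, of 0 1 "\<lambda>y. y ^ 2"])
       (auto intro!: derivative_eq_intros simp: power_le_one)
  ultimately have "integral {0 ^ 2..1 ^ 2} F1 = ln 2"
    using has_integral_unique by blast
  then have "integral {0..1} F1 = ln 2" by simp
  then have F1i: "(F1 has_integral ln 2) {0..1}"
    using integrable_continuous_real[OF F1_cont] has_integral_integral by metis
  show ?thesis
    by (rule has_integral_spike_finite[OF _ _ F1i, of "{1}"]) (auto simp: F1_def)
qed

lemma ck: "((\<lambda>x::real. (x ^ k - 1) / ln x) has_integral ln (real k + 1)) {0..1}"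
proof (cases "k = 0")
  case True
  then show ?thesis by simp
next
  case False
  have i0: "((\<lambda>x. (x powr real k - x) / ln x + (x - 1) / ln x) has_integral
      (ln (real k + 1) - ln 2 + ln 2)) {0..1}"
    by (rule has_integral_add[OF lemA c1]) (use False in auto)
  have i1: "((\<lambda>x. (x powr real k - x) / ln x + (x - 1) / ln x) has_integral
      (ln (real k + 1))) {0..1}" using i0 by simp
  show ?thesis
  proof (rule has_integral_spike_finite[OF _ _ i1, of "{0}"])
    fix x :: real assume "x \<in> {0..1} - {0}"
    then have "0 < x" by auto
    then show "(x ^ k - 1) / ln x = (x powr real k - x) / ln x + (x - 1) / ln x"
      by (simp add: powr_realpow add_divide_distrib[symmetric])
  qed auto
qed

definition Aseq :: "nat \<Rightarrow> real" where
  "Aseq n = (\<Sum>k=0..n. (-1) ^ (k + 1) * real (n choose k) * ln (real k + 1))"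

lemma An:
  assumes "n \<ge> 1"
  shows "((\<lambda>x::real. - ((1 - x) ^ n) / ln x) has_integral Aseq n) {0..1}"
proof -
  have i: "((\<lambda>x. \<Sum>k=0..n. ((-1) ^ (k + 1) * real (n choose k)) * ((x ^ k - 1) / ln x)) has_integral Aseq n) {0..1}"
    unfolding Aseq_def
    by (intro has_integral_sum finite_atLeastAtMost has_integral_mult_right ck)
  show ?thesis
  proof (rule has_integral_spike_finite[OF _ _ i, of "{}"])
    fix x :: real
    have b: "(1 - x) ^ n = (\<Sum>k=0..n. real (n choose k) * (- x) ^ k)"
      using binomial_ring[of "- x" 1 n] by (simp add: atLeast0AtMost)
    have z: "(\<Sum>k=0..n. (-1) ^ k * real (n choose k)) = 0"
      using choose_alternating_sum[of n] assms by (simp add: atLeast0AtMost)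
    have "(\<Sum>k=0..n. ((-1) ^ (k + 1) * real (n choose k)) * ((x ^ k - 1) / ln x))
       = ((\<Sum>k=0..n. (-1) ^ k * real (n choose k)) - (\<Sum>k=0..n. real (n choose k) * (- x) ^ k)) / ln x"
    proof -
      have "(\<Sum>k=0..n. ((-1) ^ (k + 1) * real (n choose k)) * ((x ^ k - 1) / ln x))
          = (\<Sum>k=0..n. ((-1) ^ k * real (n choose k) - real (n choose k) * (- x) ^ k) / ln x)"
      proof (rule sum.cong)
        fix k assume "k \<in> {0..n}"
        have pm: "(- x) ^ k = (-1) ^ k * x ^ k" by (metis mult_minus1 power_mult_distrib)
        have "(-1) ^ (k + 1) * real (n choose k) * (x ^ k - 1) = (-1) ^ k * real (n choose k) - real (n choose k) * (- x) ^ k"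
          unfolding pm by (simp add: algebra_simps)
        then show "((-1) ^ (k + 1) * real (n choose k)) * ((x ^ k - 1) / ln x) =
            ((-1) ^ k * real (n choose k) - real (n choose k) * (- x) ^ k) / ln x"
          by (metis times_divide_eq_right)
      qed simp
      also have "\<dots> = ((\<Sum>k=0..n. (-1) ^ k * real (n choose k)) - (\<Sum>k=0..n. real (n choose k) * (- x) ^ k)) / ln x"
        by (simp add: sum_divide_distrib[symmetric] sum_subtractf)
      finally show ?thesis .
    qed
    also have "\<dots> = - ((1 - x) ^ n) / ln x" using b z by simp
    finally show "- ((1 - x) ^ n) / ln x = (\<Sum>k=0..n. ((-1) ^ (k + 1) * real (n choose k)) * ((x ^ k - 1) / ln x))"
      by simp
  qed auto
qed


definition qq :: "nat \<Rightarrow> real" where "qq m = real m / (real m + 1)"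

definition fN :: "nat \<Rightarrow> nat \<Rightarrow> real \<Rightarrow> real" where
  "fN m N x = (\<Sum>n<N. qq m ^ (n + 1) * (- ((1 - x) ^ (n + 1)) / ln x))"

definition gfun :: "nat \<Rightarrow> real \<Rightarrow> real" where
  "gfun m x = (-1 / ln x) * (real m * (1 - x) / (1 + real m * x))"

lemma fN_int: "(fN m N has_integral (\<Sum>n<N. qq m ^ (n + 1) * Aseq (n + 1))) {0..1}"
  unfolding fN_def[abs_def]
  by (intro has_integral_sum finite_lessThan has_integral_mult_right An) simp

lemma fN_alt: "fN m N x = (-1 / ln x) * (\<Sum>n<N. (qq m * (1 - x)) ^ (n + 1))"
  unfolding fN_def sum_distrib_left
  by (rule sum.cong) (simp_all add: power_mult_distrib)

lemma lnx_nonneg: "x \<in> {0..1} \<Longrightarrow> 0 \<le> -1 / ln (x::real)"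
proof -
  assume x: "x \<in> {0..1}"
  have "ln x \<le> 0"
  proof (cases "x = 0")
    case False
    then show ?thesis using x by auto
  qed simp
  then show ?thesis by (simp add: divide_nonpos_nonpos)
qed

lemma qq_bounds: "m \<ge> 1 \<Longrightarrow> 0 < qq m \<and> qq m < 1"
  unfolding qq_def by (auto simp: field_simps)

lemma geo:
  assumes "0 \<le> r" "r < (1::real)"
  shows "(\<lambda>n. r ^ (n + 1)) sums (r / (1 - r))"
proof -
  have "(\<lambda>n. r * r ^ n) sums (r * (1 / (1 - r)))"
    using geometric_sums[of r] assms by (intro sums_mult) auto
  then show ?thesis by simp
qed

lemma div_div_cancel: "(c::real) \<noteq> 0 \<Longrightarrow> (a / c) / (b / c) = a / b"
  by (cases "b = 0") (simp_all add: field_simps)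

lemma r_eq:
  assumes "m \<ge> 1" "x \<in> {0..1::real}"
  shows "qq m * (1 - x) / (1 - qq m * (1 - x)) = real m * (1 - x) / (1 + real m * x)"
proof -
  have b: "1 - qq m * (1 - x) = (1 + real m * x) / (real m + 1)"
    unfolding qq_def by (simp add: field_simps)
  have a: "qq m * (1 - x) = real m * (1 - x) / (real m + 1)"
    unfolding qq_def by simp
  have p: "1 + real m * x > 0" using assms by (simp add: add_pos_nonneg)
  have "qq m * (1 - x) / (1 - qq m * (1 - x)) = (real m * (1 - x) / (real m + 1)) / ((1 + real m * x) / (real m + 1))"
    by (subst b, subst a, rule refl)
  also have "\<dots> = real m * (1 - x) / (1 + real m * x)"
    by (rule div_div_cancel) simp
  finally show ?thesis .
qed

lemma fN_lim:
  assumes "m \<ge> 1" "x \<in> {0..1::real}"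
  shows "(\<lambda>N. fN m N x) \<longlonglongrightarrow> gfun m x"
proof -
  have r: "0 \<le> qq m * (1 - x)" "qq m * (1 - x) < 1"
  proof -
    have q: "0 < qq m" "qq m < 1" using qq_bounds[OF assms(1)] by auto
    show "0 \<le> qq m * (1 - x)" using q assms(2) by simp
    have "qq m * (1 - x) \<le> qq m" using q assms(2) by (intro mult_left_le) auto
    then show "qq m * (1 - x) < 1" using q by linarith
  qed
  have "(\<lambda>N. \<Sum>n<N. (qq m * (1 - x)) ^ (n + 1)) \<longlonglongrightarrow> real m * (1 - x) / (1 + real m * x)"
    using geo[OF r] r_eq[OF assms] by (simp add: sums_def)
  then show ?thesis unfolding fN_alt gfun_def by (intro tendsto_mult_left)
qed


lemma r_bounds:
  assumes "m \<ge> 1" "x \<in> {0..1::real}"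
  shows "0 \<le> qq m * (1 - x)" "qq m * (1 - x) < 1"
proof -
  have q: "0 < qq m" "qq m < 1" using qq_bounds[OF assms(1)] by auto
  show "0 \<le> qq m * (1 - x)" using q assms(2) by simp
  have "qq m * (1 - x) \<le> qq m" using q assms(2) by (intro mult_left_le) auto
  then show "qq m * (1 - x) < 1" using q by linarith
qed

lemma fN_mono:
  assumes "m \<ge> 1" "x \<in> {0..1::real}"
  shows "fN m N x \<le> fN m (Suc N) x"
proof -
  have "fN m (Suc N) x = fN m N x + (-1 / ln x) * (qq m * (1 - x)) ^ (N + 1)"
    unfolding fN_alt by (simp add: algebra_simps)
  moreover have "0 \<le> (-1 / ln x) * (qq m * (1 - x)) ^ (N + 1)"
  proof -
    have "0 \<le> (qq m * (1 - x)) ^ (N + 1)" using r_bounds[OF assms] by (intro zero_le_power) simp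
    then show ?thesis using lnx_nonneg[OF assms(2)] by (rule mult_nonneg_nonneg[rotated])
  qed
  ultimately show ?thesis by simp
qed

lemma fN_nonneg:
  assumes "m \<ge> 1" "x \<in> {0..1::real}"
  shows "0 \<le> fN m N x"
  unfolding fN_alt using lnx_nonneg[OF assms(2)] r_bounds[OF assms]
  by (intro mult_nonneg_nonneg sum_nonneg) auto

lemma fN_le_g:
  assumes "m \<ge> 1" "x \<in> {0..1::real}"
  shows "fN m N x \<le> gfun m x"
proof -
  have r: "0 \<le> qq m * (1 - x)" "qq m * (1 - x) < 1" using r_bounds[OF assms] by auto
  have s: "(\<lambda>n. (qq m * (1 - x)) ^ (n + 1)) sums (real m * (1 - x) / (1 + real m * x))"
    using geo[OF r] r_eq[OF assms] by simp
  have "(\<Sum>n<N. (qq m * (1 - x)) ^ (n + 1)) \<le> real m * (1 - x) / (1 + real m * x)"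
    using sum_le_suminf[OF sums_summable[OF s], of "{..<N}"] sums_unique[OF s] r by simp
  then show ?thesis
    unfolding fN_alt gfun_def using lnx_nonneg[OF assms(2)] by (intro mult_left_mono) auto
qed

lemma g_le:
  assumes "m \<ge> 1" "x \<in> {0..1::real}"
  shows "gfun m x \<le> real m"
proof (cases "x = 0 \<or> x = 1")
  case True
  then show ?thesis by (auto simp: gfun_def)
next
  case False
  then have x: "0 < x" "x < 1" using assms by auto
  have L: "ln x < 0" using x ln_less_zero by auto
  have L2: "1 - x \<le> - ln x" using ln_le_minus_one[OF x(1)] by simp
  have "-1 / ln x = 1 / (- ln x)" by simp
  also have "\<dots> \<le> 1 / (1 - x)"
  proof (rule divide_left_mono[OF L2])
    show "0 < - ln x * (1 - x)" using mult_pos_pos[of "- ln x" "1 - x"] L x by simp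
  qed simp
  finally have a: "-1 / ln x \<le> 1 / (1 - x)" .
  have p: "0 \<le> real m * (1 - x) / (1 + real m * x)" using x by simp
  have "gfun m x \<le> 1 / (1 - x) * (real m * (1 - x) / (1 + real m * x))"
    unfolding gfun_def using a p by (rule mult_right_mono)
  also have "\<dots> = real m / (1 + real m * x)" using x by simp
  also have "\<dots> \<le> real m"
  proof -
    have "0 \<le> real m * (real m * x)" using x by simp
    then have d: "real m \<le> real m * (1 + real m * x)" by (simp add: algebra_simps)
    have "0 < 1 + real m * x" using x by (simp add: add_pos_nonneg)
    then show ?thesis using d by (simp add: divide_le_eq)
  qed
  finally show ?thesis .
qed

lemma mc_lemma:
  assumes "m \<ge> 1"
  shows "gfun m integrable_on {0..1} \<and> ((\<lambda>N. integral {0..1} (fN m N)) \<longlonglongrightarrow> integral {0..1} (gfun m))"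
  proof (rule monotone_convergence_increasing)
    show "fN m N integrable_on {0..1}" for N using fN_int by blast
    show "fN m N x \<le> fN m (Suc N) x" if "x \<in> {0..1}" for N x using fN_mono[OF assms that] .
    show "(\<lambda>N. fN m N x) \<longlonglongrightarrow> gfun m x" if "x \<in> {0..1}" for x using fN_lim[OF assms that] .
    have "norm (integral {0..1} (fN m N)) \<le> real m" for N
    proof -
      have "0 \<le> integral {0..1} (fN m N)"
        using fN_nonneg[OF assms] by (intro integral_nonneg) (use fN_int in blast)+
      moreover have "integral {0..1} (fN m N) \<le> integral {0..1::real} (\<lambda>_. real m)"
      proof (rule integral_le)
        show "fN m N integrable_on {0..1}" using fN_int by blast
        show "(\<lambda>_. real m) integrable_on {0..1::real}"
          by (rule integrable_continuous_real) (rule continuous_on_const)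
        show "fN m N x \<le> real m" if "x \<in> {0..1}" for x
          using fN_le_g[OF assms that, of N] g_le[OF assms that] by linarith
      qed
      moreover have "integral {0..1::real} (\<lambda>_. real m) = real m" by simp
      ultimately show ?thesis by simp
    qed
    then show "bounded (range (\<lambda>N. integral {0..1} (fN m N)))"
      unfolding bounded_iff by blast
  qed

lemma series_sums:
  assumes "m \<ge> 1"
  shows "(\<lambda>n. qq m ^ (n + 1) * Aseq (n + 1)) sums integral {0..1} (gfun m)"
proof -
  have "integral {0..1} (fN m N) = (\<Sum>n<N. qq m ^ (n + 1) * Aseq (n + 1))" for N
    using fN_int by (rule integral_unique)
  then show ?thesis using mc_lemma[OF assms] unfolding sums_def by simp
qed

lemma int_inv_lin:
  assumes "m \<ge> 1"
  shows "((\<lambda>x. 1 / (1 + real m * x)) has_integral (ln (1 + real m) / real m)) {0..1}"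
proof -
  have "((\<lambda>x. real m / (1 + real m * x)) has_integral
     ((\<lambda>x. ln (1 + real m * x)) 1 - (\<lambda>x. ln (1 + real m * x)) 0)) {0..1}"
  proof (rule fundamental_theorem_of_calculus)
    fix x :: real assume x: "x \<in> {0..1}"
    then have p: "0 < 1 + real m * x" by (simp add: add_pos_nonneg)
    have "((\<lambda>x. ln (1 + real m * x)) has_real_derivative
        (real m / (1 + real m * x))) (at x within {0..1})"
      using p by (auto intro!: derivative_eq_intros)
    then show "((\<lambda>x. ln (1 + real m * x)) has_vector_derivative real m / (1 + real m * x))
        (at x within {0..1})"
      by (simp add: has_real_derivative_iff_has_vector_derivative)
  qed simp
  then have "((\<lambda>x. (1 / real m) * (real m / (1 + real m * x))) has_integral
     ((1 / real m) * ln (1 + real m))) {0..1}"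
    by (intro has_integral_mult_right) simp
  then show ?thesis using assms by simp
qed

lemma alg:
  fixes L P M x :: real
  shows "L \<noteq> 0 \<Longrightarrow> P \<noteq> 0 \<Longrightarrow> M \<noteq> 0 \<Longrightarrow>
    (1 - x + L) / (P * L) = 1 / P - (1 / M) * ((-1 / L) * (M * (1 - x) / P))"
  by (simp add: field_simps)

lemma h_int:
  assumes "m \<ge> 1"
  shows "((\<lambda>x. (1 - x + ln x) / ((1 + real m * x) * ln x)) has_integral
     (ln (1 + real m) / real m - integral {0..1} (gfun m) / real m)) {0..1}"
proof -
  have gi: "(gfun m has_integral integral {0..1} (gfun m)) {0..1}"
    using mc_lemma[OF assms] by (simp add: has_integral_integral)
  have i: "((\<lambda>x. 1 / (1 + real m * x) - (1 / real m) * gfun m x) has_integral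
     (ln (1 + real m) / real m - (1 / real m) * integral {0..1} (gfun m))) {0..1}"
    by (intro has_integral_diff int_inv_lin assms has_integral_mult_right gi)
  have i2: "((\<lambda>x. 1 / (1 + real m * x) - (1 / real m) * gfun m x) has_integral
     (ln (1 + real m) / real m - integral {0..1} (gfun m) / real m)) {0..1}"
    using i by simp
  show ?thesis
  proof (rule has_integral_spike_finite[OF _ _ i2, of "{0,1}"])
    fix x :: real assume "x \<in> {0..1} - {0,1}"
    then have x: "0 < x" "x < 1" by auto
    have L: "ln x \<noteq> 0" using x ln_less_zero[of x] by auto
    have "0 < 1 + real m * x" using x by (simp add: add_pos_nonneg)
    then have p: "1 + real m * x \<noteq> 0" by simp
    have m: "real m \<noteq> 0" using assms by simp
    show "(1 - x + ln x) / ((1 + real m * x) * ln x) = 1 / (1 + real m * x) - (1 / real m) * gfun m x"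
      unfolding gfun_def using alg[OF L p m] .
  qed auto
qed


lemma Pf: "P_factor m n = exp (qq m ^ n * Aseq n)"
proof -
  have "(\<Prod>k=0..n. (real k + 1) powr ((-1) ^ (k + 1) * real (n choose k)))
      = (\<Prod>k=0..n. exp ((-1) ^ (k + 1) * real (n choose k) * ln (real k + 1)))"
    by (rule prod.cong) (simp_all add: powr_def)
  also have "\<dots> = exp (Aseq n)" unfolding Aseq_def by (simp add: exp_sum)
  finally show ?thesis unfolding P_factor_def qq_def by (simp add: powr_def)
qed

theorem corollary10:
  fixes m :: nat
  assumes "m \<ge> 1"
  shows "convergent_prod (\<lambda>n. P_factor m (Suc n)) \<and>
         gen_euler_gamma (- of_nat m) =
           complex_of_real ((1 / real m) * ln ((real m + 1) / (\<Prod>n. P_factor m (Suc n))))"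
proof -
  define I where "I = integral {0..1} (gfun m)"
  have s: "(\<lambda>n. qq m ^ (n + 1) * Aseq (n + 1)) sums I"
    using series_sums[OF assms] unfolding I_def .
  have eqP: "(\<lambda>n. P_factor m (Suc n)) = (\<lambda>n. exp (qq m ^ (n + 1) * Aseq (n + 1)))"
    by (simp add: Pf)
  have cp: "convergent_prod (\<lambda>n. P_factor m (Suc n))"
    unfolding eqP by (rule convergent_prod_exp[OF sums_summable[OF s]])
  have pv: "(\<Prod>n. P_factor m (Suc n)) = exp I"
    unfolding eqP using prodinf_exp[OF sums_summable[OF s]] sums_unique[OF s] by simp
  have rhs: "(1 / real m) * ln ((real m + 1) / (\<Prod>n. P_factor m (Suc n)))
      = ln (1 + real m) / real m - I / real m"
  proof -
    have "ln ((real m + 1) / exp I) = ln (1 + real m) - I" by (simp add: ln_div add.commute)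
    then show ?thesis unfolding pv by (simp add: diff_divide_distrib)
  qed
  have hi: "((\<lambda>x. complex_of_real ((1 - x + ln x) / ((1 + real m * x) * ln x))) has_integral
      complex_of_real (ln (1 + real m) / real m - I / real m)) {0..1}"
    using has_integral_of_real[OF h_int[OF assms]] unfolding I_def .
  have eqf: "complex_of_real (1 - x + ln x) / ((1 - complex_of_real x * - of_nat m) * complex_of_real (ln x))
      = complex_of_real ((1 - x + ln x) / ((1 + real m * x) * ln x))" for x :: real
    by (simp add: algebra_simps)
  have "gen_euler_gamma (- of_nat m) = complex_of_real (ln (1 + real m) / real m - I / real m)"
    unfolding gen_euler_gamma_def eqf using hi by (rule integral_unique)
  then show ?thesis using cp rhs by simp
qed

end
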